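(* Let an SSSCG have weakly monotonic cost functions with identical leader and follower costs, $c_{i,\ell}=c_{i,f}=:c_i$ for all $i\in R$. Let $(\sigma_\ell,\nu)$ be an OSE or a PSE in which $\sigma_\ell$ is pure, selecting resource $i^\star$. Then this profile is a pure Nash equilibrium of the (simultaneous) singleton congestion game with players $F\cup\{\ell\}$ and costs $c_i$: i.e., for all $i\ne i^\star$ with $\nu_i>0$ and all $j\ne i$, $c_i(\nu_i+[i=i^\star])\le c_j(\nu_j+[j=i^\star]+1)$, the same holding for $i=i^\star$ with $\nu_{i^\star}>0$, namely $c_{i^\star}(\nu_{i^\star}+1)\le c_j(\nu_j+1)$ for $j\ne i^\star$; and the leader has no profitable unilateral deviation: $c_{i^\star}(\nu_{i^\star}+1)\le c_j(\nu_j+1)$ for all $j\ne i^\star$.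
   Context: A symmetric Stackelberg singleton congestion game (SSSCG) consists of a leader $\ell$, a finite set $F$ of followers, a finite set $R$ of resources which every player may select (each player selects exactly one), and cost functions $c_{i,\ell},c_{i,f}:\mathbb N\to\mathbb Q$ ($i\in R$) for the leader and the followers with $c_{i,\ell}(0)=c_{i,f}(0)=0$. The leader commits to a probability distribution $\sigma_\ell$ on $R$ (pure if it puts probability $1$ on one resource). A followers' configuration is $\nu\in\mathbb N^R$ with $\sum_i\nu_i=|F|$. The followers' expected cost of resource $i$ with $x$ followers is $c^{\sigma_\ell}_{i,f}(x)=\sigma_\ell(i)c_{i,f}(x+1)+(1-\sigma_\ell(i))c_{i,f}(x)$; the leader's cost is $c_\ell^{(\sigma_\ell,\nu)}=\sum_{i\in R}\sigma_\ell(i)c_{i,\ell}(\nu_i+1)$. $\nu$ is a Nash equilibrium for $\sigma_\ell$ ($\nu\in E^{\sigma_\ell}$) if for all $i$ with $\nu_i>0$ and all $j\ne i$, $c^{\sigma_\ell}_{i,f}(\nu_i)\le c^{\sigma_\ell}_{j,f}(\nu_j+1)$. An OSE is a pair $(\sigma_\ell,\nu)$ with $\nu\in E^{\sigma_\ell}$ minimizing $c_\ell^{(\sigma_\ell,\nu)}$ over all such pairs. A PSE is a pair $(\sigma_\ell,\nu)$ such that $\sigma_\ell$ attains the minimum over all leader strategies of $\max_{\nu'\in E^{\sigma_\ell}}c_\ell^{(\sigma_\ell,\nu')}$ and $\nu\in E^{\sigma_\ell}$ attains that maximum. $[P]$ denotes $1$ if $P$ holds and $0$ otherwise. Weakly monotonic: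 $c_i(x)\le c_i(x+1)$ for all $i,x$. *)

theory Defs
  imports Complex_Main
begin

text \<open>Symmetric Stackelberg singleton congestion game: finite resource set R (of type 'r),
  n = |F| followers (only the number of followers matters), leader costs cl and follower
  costs cf, both of type 'r \<Rightarrow> nat \<Rightarrow> rat.\<close>

definition leader_strategy :: "'r set \<Rightarrow> ('r \<Rightarrow> real) \<Rightarrow> bool" where
  "leader_strategy R \<sigma> \<longleftrightarrow>
     (\<forall>i. 0 \<le> \<sigma> i) \<and> (\<forall>i. i \<notin> R \<longrightarrow> \<sigma> i = 0) \<and> (\<Sum>i\<in>R. \<sigma> i) = 1"

definition pure_strategy :: "'r \<Rightarrow> 'r \<Rightarrow> real" where
  "pure_strategy i\<^sub>0 = (\<lambda>i. if i = i\<^sub>0 then 1 else 0)"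

definition followers_config :: "'r set \<Rightarrow> nat \<Rightarrow> ('r \<Rightarrow> nat) \<Rightarrow> bool" where
  "followers_config R n \<nu> \<longleftrightarrow> (\<forall>i. i \<notin> R \<longrightarrow> \<nu> i = 0) \<and> (\<Sum>i\<in>R. \<nu> i) = n"

definition exp_follower_cost ::
  "('r \<Rightarrow> nat \<Rightarrow> rat) \<Rightarrow> ('r \<Rightarrow> real) \<Rightarrow> 'r \<Rightarrow> nat \<Rightarrow> real" where
  "exp_follower_cost cf \<sigma> i x =
     \<sigma> i * real_of_rat (cf i (x + 1)) + (1 - \<sigma> i) * real_of_rat (cf i x)"

definition leader_cost ::
  "'r set \<Rightarrow> ('r \<Rightarrow> nat \<Rightarrow> rat) \<Rightarrow> ('r \<Rightarrow> real) \<Rightarrow> ('r \<Rightarrow> nat) \<Rightarrow> real" where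
  "leader_cost R cl \<sigma> \<nu> = (\<Sum>i\<in>R. \<sigma> i * real_of_rat (cl i (\<nu> i + 1)))"

text \<open>\<nu> \<in> E^\<sigma>\<close>
definition follower_NE ::
  "'r set \<Rightarrow> nat \<Rightarrow> ('r \<Rightarrow> nat \<Rightarrow> rat) \<Rightarrow> ('r \<Rightarrow> real) \<Rightarrow> ('r \<Rightarrow> nat) \<Rightarrow> bool" where
  "follower_NE R n cf \<sigma> \<nu> \<longleftrightarrow> followers_config R n \<nu> \<and>
     (\<forall>i\<in>R. 0 < \<nu> i \<longrightarrow> (\<forall>j\<in>R. j \<noteq> i \<longrightarrow>
        exp_follower_cost cf \<sigma> i (\<nu> i) \<le> exp_follower_cost cf \<sigma> j (\<nu> j + 1)))"

definition OSE ::
  "'r set \<Rightarrow> nat \<Rightarrow> ('r \<Rightarrow> nat \<Rightarrow> rat) \<Rightarrow> ('r \<Rightarrow> nat \<Rightarrow> rat) \<Rightarrow> ('r \<Rightarrow> real) \<Rightarrow> ('r \<Rightarrow> nat) \<Rightarrow> bool" where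
  "OSE R n cl cf \<sigma> \<nu> \<longleftrightarrow> leader_strategy R \<sigma> \<and> follower_NE R n cf \<sigma> \<nu> \<and>
     (\<forall>\<sigma>' \<nu>'. leader_strategy R \<sigma>' \<and> follower_NE R n cf \<sigma>' \<nu>' \<longrightarrow>
        leader_cost R cl \<sigma> \<nu> \<le> leader_cost R cl \<sigma>' \<nu>')"

text \<open>PSE: \<nu> attains max over E^\<sigma> of the leader's cost, and this value is at most
  max over E^\<sigma>' for every leader strategy \<sigma>' (maxima are over finite sets, and E^\<sigma>' is
  nonempty, so "\<le> max" is "\<le> some element").\<close>
definition PSE ::
  "'r set \<Rightarrow> nat \<Rightarrow> ('r \<Rightarrow> nat \<Rightarrow> rat) \<Rightarrow> ('r \<Rightarrow> nat \<Rightarrow> rat) \<Rightarrow> ('r \<Rightarrow> real) \<Rightarrow> ('r \<Rightarrow> nat) \<Rightarrow> bool" where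
  "PSE R n cl cf \<sigma> \<nu> \<longleftrightarrow> leader_strategy R \<sigma> \<and> follower_NE R n cf \<sigma> \<nu> \<and>
     (\<forall>\<nu>'. follower_NE R n cf \<sigma> \<nu>' \<longrightarrow> leader_cost R cl \<sigma> \<nu>' \<le> leader_cost R cl \<sigma> \<nu>) \<and>
     (\<forall>\<sigma>'. leader_strategy R \<sigma>' \<longrightarrow>
        (\<exists>\<nu>'. follower_NE R n cf \<sigma>' \<nu>' \<and> leader_cost R cl \<sigma> \<nu> \<le> leader_cost R cl \<sigma>' \<nu>'))"

end

theory Submission
  imports Defs
begin

lemma ecost_pure:
  "exp_follower_cost c (pure_strategy a) k x = real_of_rat (c k (x + of_bool (k = a)))"
  by (simp add: exp_follower_cost_def pure_strategy_def)

lemma lcost_pure: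
  assumes "finite R" "j \<in> R"
  shows "leader_cost R c (pure_strategy j) v = real_of_rat (c j (v j + 1))"
proof -
  have "leader_cost R c (pure_strategy j) v = (\<Sum>i\<in>R. if i = j then real_of_rat (c i (v i + 1)) else 0)"
    unfolding leader_cost_def pure_strategy_def by (rule sum.cong) auto
  also have "\<dots> = real_of_rat (c j (v j + 1))" using assms by (simp add: sum.delta)
  finally show ?thesis .
qed
lemma ls: "finite R \<Longrightarrow> j \<in> R \<Longrightarrow> leader_strategy R (pure_strategy j)"
  by (auto simp: leader_strategy_def pure_strategy_def sum.delta)
lemma NE_exists:
  fixes d :: "'r \<Rightarrow> nat \<Rightarrow> real"
  assumes fin: "finite R" and ne: "R \<noteq> {}" and mono: "\<forall>i\<in>R. \<forall>x. d i x \<le> d i (x+1)"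
  shows "\<exists>\<nu>. (\<forall>i. i \<notin> R \<longrightarrow> \<nu> i = 0) \<and> (\<Sum>i\<in>R. \<nu> i) = n \<and>
     (\<forall>i\<in>R. 0 < \<nu> i \<longrightarrow> (\<forall>k\<in>R. k \<noteq> i \<longrightarrow> d i (\<nu> i) \<le> d k (\<nu> k + 1)))"
proof (induction n)
  case 0
  show ?case by (rule exI[of _ "\<lambda>_. 0"]) simp
next
  case (Suc n)
  then obtain \<nu> where v1: "\<forall>i. i \<notin> R \<longrightarrow> \<nu> i = 0" and v2: "(\<Sum>i\<in>R. \<nu> i) = n"
    and v3: "\<forall>i\<in>R. 0 < \<nu> i \<longrightarrow> (\<forall>k\<in>R. k \<noteq> i \<longrightarrow> d i (\<nu> i) \<le> d k (\<nu> k + 1))" by blast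
  define m where "m = Min ((\<lambda>k. d k (\<nu> k + 1)) ` R)"
  have "m \<in> (\<lambda>k. d k (\<nu> k + 1)) ` R" unfolding m_def using fin ne by (intro Min_in) auto
  then obtain r where r: "r \<in> R" "m = d r (\<nu> r + 1)" by blast
  have rmin: "\<forall>k\<in>R. d r (\<nu> r + 1) \<le> d k (\<nu> k + 1)"
  proof
    fix k assume "k \<in> R"
    have "m \<le> d k (\<nu> k + 1)" unfolding m_def using fin \<open>k \<in> R\<close> by (intro Min_le) auto
    with r show "d r (\<nu> r + 1) \<le> d k (\<nu> k + 1)" by simp
  qed
  define \<nu>' where "\<nu>' = (\<lambda>i. \<nu> i + (if i = r then 1 else 0::nat))"
  have s: "(\<Sum>i\<in>R. \<nu>' i) = Suc n"
    unfolding \<nu>'_def using fin r v2 by (simp add: sum.distrib)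
  have "\<forall>i\<in>R. 0 < \<nu>' i \<longrightarrow> (\<forall>k\<in>R. k \<noteq> i \<longrightarrow> d i (\<nu>' i) \<le> d k (\<nu>' k + 1))"
  proof (intro ballI impI)
    fix i k assume i: "i \<in> R" "0 < \<nu>' i" and k: "k \<in> R" "k \<noteq> i"
    show "d i (\<nu>' i) \<le> d k (\<nu>' k + 1)"
    proof (cases "i = r")
      case True then show ?thesis using rmin k by (simp add: \<nu>'_def)
    next
      case ir: False
      then have "0 < \<nu> i" using i by (simp add: \<nu>'_def)
      show ?thesis
      proof (cases "k = r")
        case True
        have "d i (\<nu> i) \<le> d r (\<nu> r + 1)" using v3 i k \<open>0 < \<nu> i\<close> True by auto
        also have "\<dots> \<le> d r (\<nu> r + 1 + 1)" using mono r by blast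
        finally show ?thesis using True ir by (simp add: \<nu>'_def)
      next
        case False
        then show ?thesis using v3 i k \<open>0 < \<nu> i\<close> ir by (simp add: \<nu>'_def)
      qed
    qed
  qed
  moreover have "\<forall>i. i \<notin> R \<longrightarrow> \<nu>' i = 0" using v1 r by (auto simp: \<nu>'_def)
  ultimately show ?case using s by blast
qed

lemma mono_gen:
  assumes "\<forall>x. (f::nat\<Rightarrow>rat) x \<le> f (x + 1)" "x \<le> y"
  shows "f x \<le> f y"
  using assms by (metis lift_Suc_mono_le Suc_eq_plus1)

theorem theorem10:
  fixes R :: "'r set" and n :: nat and c :: "'r \<Rightarrow> nat \<Rightarrow> rat"
    and \<sigma> :: "'r \<Rightarrow> real" and \<nu> :: "'r \<Rightarrow> nat" and istar :: 'r
  assumes finR: "finite R"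
    and zero: "\<forall>i\<in>R. c i 0 = 0"
    and mono: "\<forall>i\<in>R. \<forall>x. c i x \<le> c i (x + 1)"
    and eq: "OSE R n c c \<sigma> \<nu> \<or> PSE R n c c \<sigma> \<nu>"
    and istar: "istar \<in> R"
    and pure: "\<sigma> = pure_strategy istar"
  shows "(\<forall>i\<in>R. i \<noteq> istar \<and> 0 < \<nu> i \<longrightarrow> (\<forall>j\<in>R. j \<noteq> i \<longrightarrow>
            c i (\<nu> i + of_bool (i = istar)) \<le> c j (\<nu> j + of_bool (j = istar) + 1)))
       \<and> (0 < \<nu> istar \<longrightarrow> (\<forall>j\<in>R. j \<noteq> istar \<longrightarrow> c istar (\<nu> istar + 1) \<le> c j (\<nu> j + 1)))
       \<and> (\<forall>j\<in>R. j \<noteq> istar \<longrightarrow> c istar (\<nu> istar + 1) \<le> c j (\<nu> j + 1))"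
proof -
  have NE: "follower_NE R n c \<sigma> \<nu>" using eq by (auto simp: OSE_def PSE_def)
  hence cfg: "followers_config R n \<nu>" by (simp add: follower_NE_def)
  have NE2: "c i (\<nu> i + of_bool (i = istar)) \<le> c j (\<nu> j + of_bool (j = istar) + 1)"
    if "i \<in> R" "0 < \<nu> i" "j \<in> R" "j \<noteq> i" for i j
  proof -
    have "exp_follower_cost c \<sigma> i (\<nu> i) \<le> exp_follower_cost c \<sigma> j (\<nu> j + 1)"
      using NE that unfolding follower_NE_def by blast
    then show ?thesis unfolding pure ecost_pure of_rat_less_eq by (simp add: add.commute add.left_commute)
  qed
  have P1: "\<forall>i\<in>R. i \<noteq> istar \<and> 0 < \<nu> i \<longrightarrow> (\<forall>j\<in>R. j \<noteq> i \<longrightarrow>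
            c i (\<nu> i + of_bool (i = istar)) \<le> c j (\<nu> j + of_bool (j = istar) + 1))"
    using NE2 by blast
  have P2: "0 < \<nu> istar \<longrightarrow> (\<forall>j\<in>R. j \<noteq> istar \<longrightarrow> c istar (\<nu> istar + 1) \<le> c j (\<nu> j + 1))"
    using NE2[of istar] istar by auto
  have key: "c j (\<nu>' j + 1) \<le> c j (\<nu> j + 1)"
    if j: "j \<in> R" "j \<noteq> istar" and NE': "follower_NE R n c (pure_strategy j) \<nu>'" for j \<nu>'
  proof (cases "\<nu>' j \<le> \<nu> j")
    case True then show ?thesis using mono j by (intro mono_gen[of "c _"]) auto
  next
    case False
    have cfg': "followers_config R n \<nu>'" using NE' by (simp add: follower_NE_def)
    have "\<exists>k\<in>R - {j}. \<nu>' k < \<nu> k"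
    proof (rule ccontr)
      assume "\<not> ?thesis"
      hence le: "\<forall>k\<in>R - {j}. \<nu> k \<le> \<nu>' k" by (auto simp: not_less)
      have "(\<Sum>k\<in>R. \<nu> k) = \<nu> j + (\<Sum>k\<in>R - {j}. \<nu> k)" using finR j by (simp add: sum.remove)
      also have "\<dots> < \<nu>' j + (\<Sum>k\<in>R - {j}. \<nu>' k)" proof -
        have "sum \<nu> (R - {j}) \<le> sum \<nu>' (R - {j})" using le by (intro sum_mono) auto
        then show ?thesis using False by linarith
      qed
      also have "\<dots> = (\<Sum>k\<in>R. \<nu>' k)" using finR j by (simp add: sum.remove)
      finally show False using cfg cfg' by (simp add: followers_config_def)
    qed
    then obtain k where k: "k \<in> R" "k \<noteq> j" "\<nu>' k < \<nu> k" by blast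
    have "c j (\<nu>' j + 1) \<le> c k (\<nu>' k + 1)"
      using NE' j k False unfolding follower_NE_def ecost_pure
      by (auto simp: of_rat_less_eq)
    also have "\<dots> \<le> c k (\<nu> k + of_bool (k = istar))" using mono k by (intro mono_gen[of "c _"]) auto
    also have "\<dots> \<le> c j (\<nu> j + of_bool (j = istar) + 1)" using NE2[of k j] k j by simp
    finally show ?thesis using j by simp
  qed
  have P3: "\<forall>j\<in>R. j \<noteq> istar \<longrightarrow> c istar (\<nu> istar + 1) \<le> c j (\<nu> j + 1)"
  proof (intro ballI impI)
    fix j assume j: "j \<in> R" "j \<noteq> istar"
    have ls: "leader_strategy R (pure_strategy j)"
      using finR j(1) by (rule ls)
    have "\<exists>\<nu>'. follower_NE R n c (pure_strategy j) \<nu>' \<and>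
        leader_cost R c \<sigma> \<nu> \<le> leader_cost R c (pure_strategy j) \<nu>'"
      using eq
    proof
      assume O: "OSE R n c c \<sigma> \<nu>"
      have "\<exists>\<nu>'. (\<forall>i. i \<notin> R \<longrightarrow> \<nu>' i = 0) \<and> (\<Sum>i\<in>R. \<nu>' i) = n \<and>
         (\<forall>i\<in>R. 0 < \<nu>' i \<longrightarrow> (\<forall>k\<in>R. k \<noteq> i \<longrightarrow>
           exp_follower_cost c (pure_strategy j) i (\<nu>' i) \<le> exp_follower_cost c (pure_strategy j) k (\<nu>' k + 1)))"
        using finR j mono by (intro NE_exists) (auto simp: ecost_pure of_rat_less_eq)
      then obtain \<nu>' where "follower_NE R n c (pure_strategy j) \<nu>'"
        by (auto simp: follower_NE_def followers_config_def)
      then show ?thesis using O ls by (auto simp: OSE_def)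
    next
      assume "PSE R n c c \<sigma> \<nu>"
      then show ?thesis using ls by (auto simp: PSE_def)
    qed
    then obtain \<nu>' where v': "follower_NE R n c (pure_strategy j) \<nu>'"
      and le: "leader_cost R c \<sigma> \<nu> \<le> leader_cost R c (pure_strategy j) \<nu>'" by blast
    have "c istar (\<nu> istar + 1) \<le> c j (\<nu>' j + 1)"
      using le unfolding pure lcost_pure[OF finR istar] lcost_pure[OF finR j(1)]
      by (simp add: of_rat_less_eq)
    also have "\<dots> \<le> c j (\<nu> j + 1)" using key[OF j v'] .
    finally show "c istar (\<nu> istar + 1) \<le> c j (\<nu> j + 1)" .
  qed
  show ?thesis using P1 P2 P3 by blast
qed

end
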